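(* For every $n\in\mathbb{N}$ let $M_n\in\mathcal{M}_n$ be fixed and let $H_n$ be a uniformly random element of $\mathcal{M}_n$. Then for every $\eta>0$, $\lim_{n\to\infty}\mathbb{P}\big(|d_M(M_n,H_n)-\mathbb{E}(d_M(M_n,H_n))|>\eta\big)=0$.
   Context: $\mathcal{M}_n$ is the set of $n\times n$ real matrices with all entries in $\{n^{-1/2},-n^{-1/2}\}$. A matrix $A$ is regarded as an operator $v\mapsto vA$ on functions on $[n]$ with the uniform probability measure. $\mathcal{S}_k(A)$ is the set of joint distributions on $\mathbb{R}^{2k}$ of $(v_1,\dots,v_k,v_1A,\dots,v_kA)$ over $v_i:[n]\to[-1,1]$; $d_M(A,B)=\sum_k2^{-k}d_H(\mathcal{S}_k(A),\mathcal{S}_k(B))$ with $d_H$ the Hausdorff distance induced by the Lévy–Prokhorov metric. *)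

theory Defs
  imports "HOL-Probability.Probability"
begin

text \<open>Matrices are functions on index pairs, extensional outside [n] x [n] (indices 0..n-1).\<close>
definition Mset :: "nat \<Rightarrow> (nat \<Rightarrow> nat \<Rightarrow> real) set" where
  "Mset n = {A. (\<forall>i<n. \<forall>j<n. A i j = 1 / sqrt (real n) \<or> A i j = - 1 / sqrt (real n))
                 \<and> (\<forall>i j. \<not> (i < n \<and> j < n) \<longrightarrow> A i j = 0)}"

definition act :: "nat \<Rightarrow> (nat \<Rightarrow> real) \<Rightarrow> (nat \<Rightarrow> nat \<Rightarrow> real) \<Rightarrow> nat \<Rightarrow> real" where
  "act n v A j = (\<Sum>i<n. v i * A i j)"

text \<open>Points of R^m are represented as functions nat => real; only coordinates < m matter.\<close>
definition edist :: "nat \<Rightarrow> (nat \<Rightarrow> real) \<Rightarrow> (nat \<Rightarrow> real) \<Rightarrow> real" where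
  "edist m x y = sqrt (\<Sum>i<m. (x i - y i)^2)"

definition nbhd :: "nat \<Rightarrow> real \<Rightarrow> (nat \<Rightarrow> real) set \<Rightarrow> (nat \<Rightarrow> real) set" where
  "nbhd m e A = {y. \<exists>x\<in>A. edist m x y < e}"

definition lp_dist :: "nat \<Rightarrow> (nat \<Rightarrow> real) pmf \<Rightarrow> (nat \<Rightarrow> real) pmf \<Rightarrow> real" where
  "lp_dist m \<mu> \<nu> = Inf {e. e > 0 \<and> (\<forall>A.
      measure_pmf.prob \<mu> A \<le> measure_pmf.prob \<nu> (nbhd m e A) + e \<and>
      measure_pmf.prob \<nu> A \<le> measure_pmf.prob \<mu> (nbhd m e A) + e)}"

definition hausdorff_lp :: "nat \<Rightarrow> (nat \<Rightarrow> real) pmf set \<Rightarrow> (nat \<Rightarrow> real) pmf set \<Rightarrow> real" where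
  "hausdorff_lp m S T = max (SUP \<mu>\<in>S. INF \<nu>\<in>T. lp_dist m \<mu> \<nu>) (SUP \<nu>\<in>T. INF \<mu>\<in>S. lp_dist m \<mu> \<nu>)"

definition profile_pt :: "nat \<Rightarrow> nat \<Rightarrow> (nat \<Rightarrow> nat \<Rightarrow> real) \<Rightarrow> (nat \<Rightarrow> nat \<Rightarrow> real) \<Rightarrow> nat \<Rightarrow> (nat \<Rightarrow> real)" where
  "profile_pt n k vs A x = (\<lambda>i. if i < k then vs i x
                               else if i < 2 * k then act n (vs (i - k)) A x else 0)"

definition Sk :: "nat \<Rightarrow> nat \<Rightarrow> (nat \<Rightarrow> nat \<Rightarrow> real) \<Rightarrow> (nat \<Rightarrow> real) pmf set" where
  "Sk n k A = {map_pmf (profile_pt n k vs A) (pmf_of_set {..<n}) | vs.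
                 \<forall>j<k. \<forall>x<n. vs j x \<in> {-1..1}}"

definition dM :: "nat \<Rightarrow> (nat \<Rightarrow> nat \<Rightarrow> real) \<Rightarrow> (nat \<Rightarrow> nat \<Rightarrow> real) \<Rightarrow> real" where
  "dM n A B = (\<Sum>k. (1/2) ^ (Suc k) * hausdorff_lp (2 * Suc k) (Sk n (Suc k) A) (Sk n (Suc k) B))"

end

theory Submission
  imports Defs
begin


lemma sum_PiE_insert:
  assumes "j \<notin> I" "finite I" "finite S"
  shows "(\<Sum>g\<in>PiE (insert j I) (\<lambda>_. S). F g) = (\<Sum>g\<in>PiE I (\<lambda>_. S). \<Sum>y\<in>S. F (g(j:=y)))"
proof -
  have inj: "inj_on (\<lambda>(y,g). g(j:=y)) (S \<times> PiE I (\<lambda>_. S))"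
  proof (rule inj_onI, clarsimp)
    fix y g y' g'
    assume g: "g \<in> PiE I (\<lambda>_. S)" and g': "g' \<in> PiE I (\<lambda>_. S)" and e: "g(j := y) = g'(j := y')"
    have "y = y'" using fun_cong[OF e, of j] by simp
    moreover have "g = g'"
    proof
      fix x show "g x = g' x"
        using fun_cong[OF e, of x] g g' assms(1) by (cases "x = j") (auto simp: PiE_def extensional_def)
    qed
    ultimately show "y = y' \<and> g = g'" by simp
  qed
  have "(\<Sum>g\<in>PiE (insert j I) (\<lambda>_. S). F g) = (\<Sum>p\<in>S \<times> PiE I (\<lambda>_. S). F ((\<lambda>(y,g). g(j:=y)) p))"
    unfolding PiE_insert_eq by (subst sum.reindex[OF inj]) (simp add: split_def)
  also have "\<dots> = (\<Sum>y\<in>S. \<Sum>g\<in>PiE I (\<lambda>_. S). F (g(j:=y)))"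
    by (subst sum.cartesian_product) (auto intro!: sum.cong)
  also have "\<dots> = (\<Sum>g\<in>PiE I (\<lambda>_. S). \<Sum>y\<in>S. F (g(j:=y)))"
    by (rule sum.swap)
  finally show ?thesis .
qed

lemma var_bound_sum:
  fixes f :: "('i \<Rightarrow> 'a) \<Rightarrow> real"
    and c :: real
  assumes "finite I" "finite S" "S \<noteq> {}" "c \<ge> 0"
    and "\<And>j g y. j \<in> I \<Longrightarrow> g \<in> PiE I (\<lambda>_. S) \<Longrightarrow> y \<in> S \<Longrightarrow> \<bar>f (g(j:=y)) - f g\<bar> \<le> c"
  shows "(\<Sum>g\<in>PiE I (\<lambda>_. S). (f g - (\<Sum>g\<in>PiE I (\<lambda>_. S). f g) / card (PiE I (\<lambda>_. S)))\<^sup>2)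
           / card (PiE I (\<lambda>_. S)) \<le> card I * c\<^sup>2"
  using assms(1,5)
proof (induction I arbitrary: f rule: finite_induct)
  case empty
  then show ?case by simp
next
  case (insert j I)
  define P where "P = PiE I (\<lambda>_. S)"
  define P' where "P' = PiE (insert j I) (\<lambda>_. S)"
  define N where "N = real (card S)"
  define K where "K = real (card P)"
  have finP: "finite P" unfolding P_def using insert(1) assms(2) by (simp add: finite_PiE)
  have PneP: "P \<noteq> {}" unfolding P_def using assms(3) by (simp add: PiE_eq_empty_iff)
  have Npos: "N > 0" unfolding N_def using assms(2,3) by (simp add: card_gt_0_iff)
  have Kpos: "K > 0" unfolding K_def using finP PneP by (simp add: card_gt_0_iff)
  have sumP': "\<And>F. (\<Sum>g\<in>P'. F g) = (\<Sum>g\<in>P. \<Sum>y\<in>S. F (g(j:=y)))"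
    unfolding P_def P'_def by (rule sum_PiE_insert[OF insert(2,1) assms(2)])
  have cardP': "real (card P') = N * K"
    using sumP'[of "\<lambda>_. 1::real"] unfolding N_def K_def by simp
  define h where "h g = (\<Sum>y\<in>S. f (g(j:=y))) / N" for g
  define m where "m = (\<Sum>g\<in>P. h g) / K"
  have mf: "(\<Sum>g\<in>P'. f g) / card P' = m"
    unfolding cardP' sumP' m_def h_def using Npos Kpos
    by (simp add: sum_divide_distrib[symmetric] field_simps)
  have inP': "g(j:=y) \<in> P'" if "g \<in> P" "y \<in> S" for g y
    using that unfolding P_def P'_def by (simp add: PiE_fun_upd)
  have close: "\<bar>f (g(j:=y)) - h g\<bar> \<le> c" if g: "g \<in> P" and y: "y \<in> S" for g y
  proof -
    have "f (g(j:=y)) - h g = (\<Sum>y'\<in>S. f (g(j:=y)) - f (g(j:=y'))) / N"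
      unfolding h_def using Npos by (simp add: sum_subtractf field_simps N_def)
    also have "\<bar>\<dots>\<bar> \<le> (\<Sum>y'\<in>S. c) / N"
    proof -
      have "\<bar>\<Sum>y'\<in>S. f (g(j:=y)) - f (g(j:=y'))\<bar> \<le> (\<Sum>y'\<in>S. \<bar>f (g(j:=y)) - f (g(j:=y'))\<bar>)"
        by (rule sum_abs)
      also have "\<dots> \<le> (\<Sum>y'\<in>S. c)"
      proof (rule sum_mono)
        fix y' assume "y' \<in> S"
        have e: "(g(j:=y'))(j:=y) = g(j:=y)" by simp
        have "\<bar>f ((g(j:=y'))(j:=y)) - f (g(j:=y'))\<bar> \<le> c"
          using insert(4)[OF insertI1 _ y] inP'[OF g \<open>y' \<in> S\<close>] unfolding P'_def by blast
        then show "\<bar>f (g(j:=y)) - f (g(j:=y'))\<bar> \<le> c" by (simp only: e)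
      qed
      finally show ?thesis using Npos by (simp add: divide_right_mono)
    qed
    also have "\<dots> = c" using Npos unfolding N_def by simp
    finally show ?thesis .
  qed
  have decomp: "(\<Sum>y\<in>S. (f (g(j:=y)) - m)\<^sup>2) = (\<Sum>y\<in>S. (f (g(j:=y)) - h g)\<^sup>2) + N * (h g - m)\<^sup>2"
    if "g \<in> P" for g
  proof -
    have z: "(\<Sum>y\<in>S. f (g(j:=y)) - h g) = 0"
      unfolding h_def sum_subtractf using Npos by (simp add: N_def)
    have "(\<Sum>y\<in>S. (f (g(j:=y)) - m)\<^sup>2) = (\<Sum>y\<in>S. (f (g(j:=y)) - h g)\<^sup>2 + 2 * (h g - m) * (f (g(j:=y)) - h g) + (h g - m)\<^sup>2)"
      by (rule sum.cong) (auto simp: power2_eq_square algebra_simps)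
    also have "\<dots> = (\<Sum>y\<in>S. (f (g(j:=y)) - h g)\<^sup>2) + 2 * (h g - m) * (\<Sum>y\<in>S. f (g(j:=y)) - h g) + N * (h g - m)\<^sup>2"
      by (simp add: sum.distrib sum_distrib_left[symmetric] N_def)
    finally show ?thesis using z by simp
  qed
  have IH: "(\<Sum>g\<in>P. (h g - m)\<^sup>2) / K \<le> card I * c\<^sup>2"
  proof -
    have "(\<Sum>g\<in>P. (h g - (\<Sum>g\<in>P. h g) / card P)\<^sup>2) / card P \<le> card I * c\<^sup>2"
      unfolding P_def
    proof (rule insert(3))
      fix i g z assume i: "i \<in> I" and g: "g \<in> PiE I (\<lambda>_. S)" and z: "z \<in> S"
      have ij: "i \<noteq> j" using i insert(2) by auto
      have "h (g(i:=z)) - h g = (\<Sum>y\<in>S. f ((g(j:=y))(i:=z)) - f (g(j:=y))) / N"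
        unfolding h_def sum_subtractf using ij by (simp add: fun_upd_twist diff_divide_distrib)
      also have "\<bar>\<dots>\<bar> \<le> (\<Sum>y\<in>S. c) / N"
      proof -
        have "\<bar>\<Sum>y\<in>S. f ((g(j:=y))(i:=z)) - f (g(j:=y))\<bar> \<le> (\<Sum>y\<in>S. c)"
        proof -
          have b: "\<bar>f ((g(j:=y))(i:=z)) - f (g(j:=y))\<bar> \<le> c" if y: "y \<in> S" for y
          proof -
            have A: "g(j:=y) \<in> PiE (insert j I) (\<lambda>_. S)" using inP'[of g y] g y unfolding P_def P'_def by blast
            have ii: "i \<in> insert j I" using i by blast
            show ?thesis by (rule insert(4)[OF ii A z])
          qed
          have "\<bar>\<Sum>y\<in>S. f ((g(j:=y))(i:=z)) - f (g(j:=y))\<bar> \<le> (\<Sum>y\<in>S. \<bar>f ((g(j:=y))(i:=z)) - f (g(j:=y))\<bar>)"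
            by (rule sum_abs)
          also have "\<dots> \<le> (\<Sum>y\<in>S. c)" by (rule sum_mono) (rule b)
          finally show ?thesis .
        qed
        then show ?thesis using Npos by (simp add: divide_right_mono)
      qed
      also have "\<dots> = c" using Npos unfolding N_def by simp
      finally show "\<bar>h (g(i:=z)) - h g\<bar> \<le> c" .
    qed
    then show ?thesis unfolding m_def K_def .
  qed
  have "(\<Sum>g\<in>P'. (f g - (\<Sum>g\<in>P'. f g) / card P')\<^sup>2) / card P' = (\<Sum>g\<in>P. \<Sum>y\<in>S. (f (g(j:=y)) - m)\<^sup>2) / (N * K)"
    unfolding mf unfolding cardP' sumP' ..
  also have "\<dots> = (\<Sum>g\<in>P. (\<Sum>y\<in>S. (f (g(j:=y)) - h g)\<^sup>2) + N * (h g - m)\<^sup>2) / (N * K)"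
    by (intro arg_cong[where f="\<lambda>x. x / (N * K)"] sum.cong refl) (rule decomp)
  also have "\<dots> \<le> (\<Sum>g\<in>P. N * c\<^sup>2 + N * (h g - m)\<^sup>2) / (N * K)"
  proof -
    have bnd: "(\<Sum>y\<in>S. (f (g(j:=y)) - h g)\<^sup>2) \<le> N * c\<^sup>2" if "g \<in> P" for g
    proof -
      have "(\<Sum>y\<in>S. (f (g(j:=y)) - h g)\<^sup>2) \<le> (\<Sum>y\<in>S. c\<^sup>2)"
      proof (rule sum_mono)
        fix y assume "y \<in> S"
        from close[OF that this] have "\<bar>f (g(j:=y)) - h g\<bar> \<le> \<bar>c\<bar>" by simp
        then show "(f (g(j:=y)) - h g)\<^sup>2 \<le> c\<^sup>2" by (simp only: abs_le_square_iff)
      qed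
      then show ?thesis by (simp add: N_def)
    qed
    have "(\<Sum>g\<in>P. (\<Sum>y\<in>S. (f (g(j:=y)) - h g)\<^sup>2) + N * (h g - m)\<^sup>2) \<le> (\<Sum>g\<in>P. N * c\<^sup>2 + N * (h g - m)\<^sup>2)"
      by (intro sum_mono add_right_mono bnd)
    moreover have "N * K \<ge> 0" using Npos Kpos by simp
    ultimately show ?thesis by (rule divide_right_mono)
  qed
  also have "\<dots> = c\<^sup>2 + (\<Sum>g\<in>P. (h g - m)\<^sup>2) / K"
  proof -
    have "(\<Sum>g\<in>P. N * c\<^sup>2 + N * (h g - m)\<^sup>2) = N * K * c\<^sup>2 + N * (\<Sum>g\<in>P. (h g - m)\<^sup>2)"
      by (simp add: sum.distrib sum_distrib_left K_def)
    then show ?thesis using Npos Kpos by (simp add: field_simps)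
  qed
  also have "\<dots> \<le> c\<^sup>2 + card I * c\<^sup>2" using IH by simp
  also have "\<dots> = card (insert j I) * c\<^sup>2" using insert(1,2) by (simp add: algebra_simps)
  finally show ?case unfolding P'_def .
qed



definition lpset :: "nat \<Rightarrow> (nat \<Rightarrow> real) pmf \<Rightarrow> (nat \<Rightarrow> real) pmf \<Rightarrow> real set" where
  "lpset m \<mu> \<nu> = {e. e > 0 \<and> (\<forall>A.
      measure_pmf.prob \<mu> A \<le> measure_pmf.prob \<nu> (nbhd m e A) + e \<and>
      measure_pmf.prob \<nu> A \<le> measure_pmf.prob \<mu> (nbhd m e A) + e)}"

lemma lp_eq: "lp_dist m \<mu> \<nu> = Inf (lpset m \<mu> \<nu>)"
  unfolding lp_dist_def lpset_def ..

lemma one_in_lpset: "1 \<in> lpset m \<mu> \<nu>"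
proof -
  show ?thesis unfolding lpset_def
    by (auto intro: order_trans[OF measure_pmf.prob_le_1] simp: add_increasing)
qed

lemma bdd_lpset: "bdd_below (lpset m \<mu> \<nu>)"
  unfolding lpset_def by (rule bdd_belowI[of _ 0]) auto

lemma lp_nonneg: "0 \<le> lp_dist m \<mu> \<nu>"
  unfolding lp_eq
proof (rule cInf_greatest)
  show "lpset m \<mu> \<nu> \<noteq> {}" using one_in_lpset by blast
  fix x assume "x \<in> lpset m \<mu> \<nu>" then show "0 \<le> x" by (simp add: lpset_def)
qed

lemma lp_le1: "lp_dist m \<mu> \<nu> \<le> 1"
  unfolding lp_eq by (rule cInf_lower[OF one_in_lpset bdd_lpset])

lemma nbhd_mono: "e \<le> e' \<Longrightarrow> nbhd m e A \<subseteq> nbhd m e' A"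
  unfolding nbhd_def by force

lemma lp_shift:
  assumes d: "\<delta> \<ge> 0"
    and c1: "\<And>A. measure_pmf.prob \<nu>' A \<le> measure_pmf.prob \<nu> A + \<delta>"
    and c2: "\<And>A. measure_pmf.prob \<nu> A \<le> measure_pmf.prob \<nu>' A + \<delta>"
  shows "lp_dist m \<mu> \<nu>' \<le> lp_dist m \<mu> \<nu> + \<delta>"
proof -
  have sh: "e + \<delta> \<in> lpset m \<mu> \<nu>'" if e: "e \<in> lpset m \<mu> \<nu>" for e
  proof -
    have ep: "e > 0" using e by (simp add: lpset_def)
    have mon: "measure_pmf.prob p (nbhd m e A) \<le> measure_pmf.prob p (nbhd m (e + \<delta>) A)" for p A
      by (rule measure_pmf.finite_measure_mono[OF nbhd_mono]) (use d in auto)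
    have "measure_pmf.prob \<mu> A \<le> measure_pmf.prob \<nu>' (nbhd m (e + \<delta>) A) + (e + \<delta>)" for A
    proof -
      have "measure_pmf.prob \<mu> A \<le> measure_pmf.prob \<nu> (nbhd m e A) + e" using e by (simp add: lpset_def)
      also have "\<dots> \<le> measure_pmf.prob \<nu>' (nbhd m e A) + \<delta> + e" using c2 by simp
      also have "\<dots> \<le> measure_pmf.prob \<nu>' (nbhd m (e + \<delta>) A) + (e + \<delta>)" using mon[of \<nu>' A] by simp
      finally show ?thesis .
    qed
    moreover have "measure_pmf.prob \<nu>' A \<le> measure_pmf.prob \<mu> (nbhd m (e + \<delta>) A) + (e + \<delta>)" for A
    proof -
      have "measure_pmf.prob \<nu>' A \<le> measure_pmf.prob \<nu> A + \<delta>" by (rule c1)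
      also have "\<dots> \<le> measure_pmf.prob \<mu> (nbhd m e A) + e + \<delta>" using e by (simp add: lpset_def)
      also have "\<dots> \<le> measure_pmf.prob \<mu> (nbhd m (e + \<delta>) A) + (e + \<delta>)" using mon[of \<mu> A] by simp
      finally show ?thesis .
    qed
    ultimately show ?thesis using ep d unfolding lpset_def by auto
  qed
  have "lp_dist m \<mu> \<nu>' - \<delta> \<le> Inf (lpset m \<mu> \<nu>)"
  proof (rule cInf_greatest)
    show "lpset m \<mu> \<nu> \<noteq> {}" using one_in_lpset by blast
    fix e assume "e \<in> lpset m \<mu> \<nu>"
    then have "lp_dist m \<mu> \<nu>' \<le> e + \<delta>" unfolding lp_eq by (intro cInf_lower[OF sh bdd_lpset])
    then show "lp_dist m \<mu> \<nu>' - \<delta> \<le> e" by simp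
  qed
  then show ?thesis unfolding lp_eq by simp
qed

lemma haus_shift:
  fixes d :: "'a \<Rightarrow> 'b \<Rightarrow> real"
  assumes S: "S \<noteq> {}" and T: "T \<noteq> {}" and T': "T' \<noteq> {}"
    and b0: "\<And>\<mu> \<nu>. 0 \<le> d \<mu> \<nu>" and b1: "\<And>\<mu> \<nu>. d \<mu> \<nu> \<le> 1"
    and h1: "\<And>\<nu>. \<nu> \<in> T \<Longrightarrow> \<exists>\<nu>'\<in>T'. \<forall>\<mu>. d \<mu> \<nu>' \<le> d \<mu> \<nu> + \<delta>"
    and h2: "\<And>\<nu>'. \<nu>' \<in> T' \<Longrightarrow> \<exists>\<nu>\<in>T. \<forall>\<mu>. d \<mu> \<nu>' \<le> d \<mu> \<nu> + \<delta>"
  shows "max (SUP \<mu>\<in>S. INF \<nu>\<in>T'. d \<mu> \<nu>) (SUP \<nu>\<in>T'. INF \<mu>\<in>S. d \<mu> \<nu>)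
         \<le> max (SUP \<mu>\<in>S. INF \<nu>\<in>T. d \<mu> \<nu>) (SUP \<nu>\<in>T. INF \<mu>\<in>S. d \<mu> \<nu>) + \<delta>"
proof -
  have bb: "bdd_below (f ` X)" if "\<And>x. 0 \<le> f x" for f :: "'c \<Rightarrow> real" and X
    using that by (intro bdd_belowI[of _ 0]) auto
  have inf1: "(INF \<nu>\<in>T. d \<mu> \<nu>) \<le> 1" for \<mu>
    using T b1 by (metis cINF_lower2 bb b0 ex_in_conv)
  have inf1': "(INF \<mu>\<in>S. d \<mu> \<nu>) \<le> 1" for \<nu>
    using S b1 by (metis cINF_lower2 bb b0 ex_in_conv)
  have ba1: "bdd_above ((\<lambda>\<mu>. INF \<nu>\<in>T. d \<mu> \<nu>) ` S)"
    using inf1 by (intro bdd_aboveI[of _ 1]) auto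
  have ba2: "bdd_above ((\<lambda>\<nu>. INF \<mu>\<in>S. d \<mu> \<nu>) ` T)"
    using inf1' by (intro bdd_aboveI[of _ 1]) auto
  have A: "(SUP \<mu>\<in>S. INF \<nu>\<in>T'. d \<mu> \<nu>) \<le> (SUP \<mu>\<in>S. INF \<nu>\<in>T. d \<mu> \<nu>) + \<delta>"
  proof (rule cSUP_least[OF S])
    fix \<mu> assume \<mu>: "\<mu> \<in> S"
    have "(INF \<nu>\<in>T'. d \<mu> \<nu>) - \<delta> \<le> (INF \<nu>\<in>T. d \<mu> \<nu>)"
    proof (rule cINF_greatest[OF T])
      fix \<nu> assume "\<nu> \<in> T"
      then obtain \<nu>' where "\<nu>' \<in> T'" "d \<mu> \<nu>' \<le> d \<mu> \<nu> + \<delta>" using h1 by blast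
      then have "(INF \<nu>\<in>T'. d \<mu> \<nu>) \<le> d \<mu> \<nu> + \<delta>" by (intro cINF_lower2[OF bb]) (auto intro: b0)
      then show "(INF \<nu>\<in>T'. d \<mu> \<nu>) - \<delta> \<le> d \<mu> \<nu>" by simp
    qed
    also have "\<dots> \<le> (SUP \<mu>\<in>S. INF \<nu>\<in>T. d \<mu> \<nu>)" by (rule cSUP_upper[OF \<mu> ba1])
    finally show "(INF \<nu>\<in>T'. d \<mu> \<nu>) \<le> (SUP \<mu>\<in>S. INF \<nu>\<in>T. d \<mu> \<nu>) + \<delta>" by simp
  qed
  have B: "(SUP \<nu>\<in>T'. INF \<mu>\<in>S. d \<mu> \<nu>) \<le> (SUP \<nu>\<in>T. INF \<mu>\<in>S. d \<mu> \<nu>) + \<delta>"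
  proof (rule cSUP_least[OF T'])
    fix \<nu>' assume "\<nu>' \<in> T'"
    then obtain \<nu> where \<nu>: "\<nu> \<in> T" and le: "\<forall>\<mu>. d \<mu> \<nu>' \<le> d \<mu> \<nu> + \<delta>" using h2 by blast
    have "(INF \<mu>\<in>S. d \<mu> \<nu>') - \<delta> \<le> (INF \<mu>\<in>S. d \<mu> \<nu>)"
    proof (rule cINF_greatest[OF S])
      fix \<mu> assume "\<mu> \<in> S"
      then have "(INF \<mu>\<in>S. d \<mu> \<nu>') \<le> d \<mu> \<nu>'" by (intro cINF_lower[OF bb]) (auto intro: b0)
      then show "(INF \<mu>\<in>S. d \<mu> \<nu>') - \<delta> \<le> d \<mu> \<nu>" using le by smt
    qed
    also have "\<dots> \<le> (SUP \<nu>\<in>T. INF \<mu>\<in>S. d \<mu> \<nu>)" by (rule cSUP_upper[OF \<nu> ba2])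
    finally show "(INF \<mu>\<in>S. d \<mu> \<nu>') \<le> (SUP \<nu>\<in>T. INF \<mu>\<in>S. d \<mu> \<nu>) + \<delta>" by simp
  qed
  show ?thesis using A B by linarith
qed

lemma haus_bounds:
  fixes d :: "'a \<Rightarrow> 'b \<Rightarrow> real"
  assumes S: "S \<noteq> {}" and T: "T \<noteq> {}"
    and b0: "\<And>\<mu> \<nu>. 0 \<le> d \<mu> \<nu>" and b1: "\<And>\<mu> \<nu>. d \<mu> \<nu> \<le> 1"
  shows "0 \<le> max (SUP \<mu>\<in>S. INF \<nu>\<in>T. d \<mu> \<nu>) (SUP \<nu>\<in>T. INF \<mu>\<in>S. d \<mu> \<nu>)"
    and "max (SUP \<mu>\<in>S. INF \<nu>\<in>T. d \<mu> \<nu>) (SUP \<nu>\<in>T. INF \<mu>\<in>S. d \<mu> \<nu>) \<le> 1"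
proof -
  have bb: "bdd_below (f ` X)" if "\<And>x. 0 \<le> f x" for f :: "'c \<Rightarrow> real" and X
    using that by (intro bdd_belowI[of _ 0]) auto
  have i0: "0 \<le> (INF \<nu>\<in>T. d \<mu> \<nu>)" for \<mu> using T b0 by (intro cINF_greatest) auto
  have i1: "(INF \<nu>\<in>T. d \<mu> \<nu>) \<le> 1" for \<mu>
    using T b1 by (metis cINF_lower2 bb b0 ex_in_conv)
  have j0: "0 \<le> (INF \<mu>\<in>S. d \<mu> \<nu>)" for \<nu> using S b0 by (intro cINF_greatest) auto
  have j1: "(INF \<mu>\<in>S. d \<mu> \<nu>) \<le> 1" for \<nu>
    using S b1 by (metis cINF_lower2 bb b0 ex_in_conv)
  have s1: "(SUP \<mu>\<in>S. INF \<nu>\<in>T. d \<mu> \<nu>) \<le> 1" using S i1 by (intro cSUP_least) auto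
  have s2: "(SUP \<nu>\<in>T. INF \<mu>\<in>S. d \<mu> \<nu>) \<le> 1" using T j1 by (intro cSUP_least) auto
  obtain \<mu> where \<mu>: "\<mu> \<in> S" using S by blast
  have "0 \<le> (SUP \<mu>\<in>S. INF \<nu>\<in>T. d \<mu> \<nu>)"
    by (rule cSUP_upper2[OF _ \<mu> i0]) (use i1 in \<open>intro bdd_aboveI[of _ 1]; auto\<close>)
  then show "0 \<le> max (SUP \<mu>\<in>S. INF \<nu>\<in>T. d \<mu> \<nu>) (SUP \<nu>\<in>T. INF \<mu>\<in>S. d \<mu> \<nu>)" by simp
  show "max (SUP \<mu>\<in>S. INF \<nu>\<in>T. d \<mu> \<nu>) (SUP \<nu>\<in>T. INF \<mu>\<in>S. d \<mu> \<nu>) \<le> 1" using s1 s2 by simp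
qed



lemma profile_eq:
  assumes "\<And>i. H i x = H' i x" shows "profile_pt n k vs H x = profile_pt n k vs H' x"
proof -
  have "act n v H x = act n v H' x" for v unfolding act_def using assms by simp
  then show ?thesis unfolding profile_pt_def by (intro ext) simp
qed

lemma map_close:
  assumes n: "n > 0" and agree: "\<And>x i. x \<noteq> j \<Longrightarrow> H i x = H' i x"
  shows "measure_pmf.prob (map_pmf (profile_pt n k vs H) (pmf_of_set {..<n})) A
    \<le> measure_pmf.prob (map_pmf (profile_pt n k vs H') (pmf_of_set {..<n})) A + 1 / real n"
proof -
  define P where "P = profile_pt n k vs H"
  define P' where "P' = profile_pt n k vs H'"
  have ne: "{..<n} \<noteq> {}" using n by auto
  have sub: "{..<n} \<inter> P -` A \<subseteq> insert j ({..<n} \<inter> P' -` A)"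
  proof
    fix x assume x: "x \<in> {..<n} \<inter> P -` A"
    show "x \<in> insert j ({..<n} \<inter> P' -` A)"
    proof (cases "x = j")
      case False
      then have "P x = P' x" unfolding P_def P'_def by (intro profile_eq agree)
      then show ?thesis using x by auto
    qed simp
  qed
  have "card ({..<n} \<inter> P -` A) \<le> card (insert j ({..<n} \<inter> P' -` A))"
    by (rule card_mono[OF _ sub]) simp
  also have "\<dots> \<le> Suc (card ({..<n} \<inter> P' -` A))" by (simp add: card_insert_le_m1 card_insert_if)
  finally have c: "real (card ({..<n} \<inter> P -` A)) \<le> real (card ({..<n} \<inter> P' -` A)) + 1" by simp
  have "measure_pmf.prob (map_pmf P (pmf_of_set {..<n})) A = real (card ({..<n} \<inter> P -` A)) / real n"
    using ne by (simp add: measure_pmf_of_set)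
  also have "\<dots> \<le> (real (card ({..<n} \<inter> P' -` A)) + 1) / real n"
    using c by (simp add: divide_right_mono)
  also have "\<dots> = measure_pmf.prob (map_pmf P' (pmf_of_set {..<n})) A + 1 / real n"
    using ne by (simp add: measure_pmf_of_set add_divide_distrib)
  finally show ?thesis unfolding P_def P'_def .
qed

lemma Sk_ne: "Sk n k A \<noteq> {}"
proof -
  have "map_pmf (profile_pt n k (\<lambda>_ _. 0) A) (pmf_of_set {..<n}) \<in> Sk n k A"
    unfolding Sk_def by auto
  then show ?thesis by blast
qed

lemma haus_Sk_shift:
  assumes n: "n > 0" and agree: "\<And>x i. x \<noteq> j \<Longrightarrow> H i x = H' i x"
  shows "hausdorff_lp m (Sk n k A) (Sk n k H') \<le> hausdorff_lp m (Sk n k A) (Sk n k H) + 1 / real n"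
proof -
  have agree': "\<And>x i. x \<noteq> j \<Longrightarrow> H' i x = H i x" using agree by metis
  have cl: "\<forall>\<mu>. lp_dist m \<mu> (map_pmf (profile_pt n k vs H') (pmf_of_set {..<n}))
     \<le> lp_dist m \<mu> (map_pmf (profile_pt n k vs H) (pmf_of_set {..<n})) + 1 / real n" for vs
    by (intro allI lp_shift map_close[OF n agree] map_close[OF n agree']) simp
  have cl': "\<forall>\<mu>. lp_dist m \<mu> (map_pmf (profile_pt n k vs H) (pmf_of_set {..<n}))
     \<le> lp_dist m \<mu> (map_pmf (profile_pt n k vs H') (pmf_of_set {..<n})) + 1 / real n" for vs
    by (intro allI lp_shift map_close[OF n agree] map_close[OF n agree']) simp
  show ?thesis unfolding hausdorff_lp_def
  proof (rule haus_shift[OF Sk_ne Sk_ne Sk_ne lp_nonneg lp_le1])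
    fix \<nu> assume "\<nu> \<in> Sk n k H"
    then obtain vs where v: "\<nu> = map_pmf (profile_pt n k vs H) (pmf_of_set {..<n})"
      and c: "\<forall>j<k. \<forall>x<n. vs j x \<in> {-1..1}" unfolding Sk_def by blast
    have "map_pmf (profile_pt n k vs H') (pmf_of_set {..<n}) \<in> Sk n k H'" using c unfolding Sk_def by blast
    then show "\<exists>\<nu>'\<in>Sk n k H'. \<forall>\<mu>. lp_dist m \<mu> \<nu>' \<le> lp_dist m \<mu> \<nu> + 1 / real n"
      using cl[of vs] v by blast
  next
    fix \<nu> assume "\<nu> \<in> Sk n k H'"
    then obtain vs where v: "\<nu> = map_pmf (profile_pt n k vs H') (pmf_of_set {..<n})"
      and c: "\<forall>j<k. \<forall>x<n. vs j x \<in> {-1..1}" unfolding Sk_def by blast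
    have "map_pmf (profile_pt n k vs H) (pmf_of_set {..<n}) \<in> Sk n k H" using c unfolding Sk_def by blast
    then show "\<exists>\<nu>'\<in>Sk n k H. \<forall>\<mu>. lp_dist m \<mu> \<nu> \<le> lp_dist m \<mu> \<nu>' + 1 / real n"
      using cl[of vs] v by blast
  qed
qed

lemma haus_Sk_bounds: "0 \<le> hausdorff_lp m (Sk n k A) (Sk n k H)" "hausdorff_lp m (Sk n k A) (Sk n k H) \<le> 1"
  unfolding hausdorff_lp_def by (rule haus_bounds[OF Sk_ne Sk_ne lp_nonneg lp_le1])+

lemma dM_shift:
  assumes n: "n > 0" and agree: "\<And>x i. x \<noteq> j \<Longrightarrow> H i x = H' i x"
  shows "\<bar>dM n A H - dM n A H'\<bar> \<le> 1 / real n"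
proof -
  have agree': "\<And>x i. x \<noteq> j \<Longrightarrow> H' i x = H i x" using agree by metis
  define h where "h B k = hausdorff_lp (2 * Suc k) (Sk n (Suc k) A) (Sk n (Suc k) B)" for B k
  define a where "a B k = (1/2::real) ^ Suc k * h B k" for B k
  have dMa: "dM n A B = suminf (a B)" for B unfolding dM_def a_def h_def ..
  have geo: "summable (\<lambda>k. (1/2::real) ^ Suc k)"
    using summable_mult[OF summable_geometric[of "1/2::real"], of "1/2"] by simp
  have sa: "summable (a B)" for B
  proof (rule summable_comparison_test[OF _ geo])
    show "\<exists>N. \<forall>k\<ge>N. norm (a B k) \<le> (1/2) ^ Suc k"
      using haus_Sk_bounds unfolding a_def h_def
      by (intro exI[of _ 0] allI impI) (simp add: abs_mult mult_left_le)
  qed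
  have g: "(\<lambda>k. (1/2::real) ^ Suc k * (1 / real n)) sums (1 / real n)"
  proof -
    have "(\<lambda>k. (1/2::real) ^ k) sums 2" using geometric_sums[of "1/2::real"] by simp
    from sums_mult[OF this, of "1 / (2 * real n)"] show ?thesis by (simp add: field_simps)
  qed
  have e1: "h H k \<le> h H' k + 1 / real n" for k
    unfolding h_def by (rule haus_Sk_shift[OF n agree'])
  have e2: "h H' k \<le> h H k + 1 / real n" for k
    unfolding h_def by (rule haus_Sk_shift[OF n agree])
  have d1: "a H k - a H' k \<le> (1/2::real) ^ Suc k * (1 / real n)" for k
  proof -
    have "a H k - a H' k = (1/2::real) ^ Suc k * (h H k - h H' k)" unfolding a_def by (simp add: algebra_simps)
    also have "\<dots> \<le> (1/2::real) ^ Suc k * (1 / real n)" using e1[of k] by (intro mult_left_mono) auto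
    finally show ?thesis .
  qed
  have d2: "a H' k - a H k \<le> (1/2::real) ^ Suc k * (1 / real n)" for k
  proof -
    have "a H' k - a H k = (1/2::real) ^ Suc k * (h H' k - h H k)" unfolding a_def by (simp add: algebra_simps)
    also have "\<dots> \<le> (1/2::real) ^ Suc k * (1 / real n)" using e2[of k] by (intro mult_left_mono) auto
    finally show ?thesis .
  qed
  have "dM n A H - dM n A H' = (\<Sum>k. a H k - a H' k)" unfolding dMa by (rule suminf_diff[OF sa sa])
  also have "\<dots> \<le> 1 / real n"
    using suminf_le[OF d1 summable_diff[OF sa sa] sums_summable[OF g]] sums_unique[OF g] by simp
  finally have u: "dM n A H - dM n A H' \<le> 1 / real n" .
  have "dM n A H' - dM n A H = (\<Sum>k. a H' k - a H k)" unfolding dMa by (rule suminf_diff[OF sa sa])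
  also have "\<dots> \<le> 1 / real n"
    using suminf_le[OF d2 summable_diff[OF sa sa] sums_summable[OF g]] sums_unique[OF g] by simp
  finally have v: "dM n A H' - dM n A H \<le> 1 / real n" .
  show ?thesis using u v by linarith
qed



definition colset :: "nat \<Rightarrow> (nat \<Rightarrow> real) set" where
  "colset n = {c. (\<forall>i<n. c i = 1 / sqrt (real n) \<or> c i = - 1 / sqrt (real n)) \<and> (\<forall>i. \<not> i < n \<longrightarrow> c i = 0)}"

definition mat :: "nat \<Rightarrow> (nat \<Rightarrow> nat \<Rightarrow> real) \<Rightarrow> nat \<Rightarrow> nat \<Rightarrow> real" where
  "mat n g = (\<lambda>i j. if j < n then g j i else 0)"

lemma colset_ne: "colset n \<noteq> {}"
proof -
  have "(\<lambda>i. if i < n then 1 / sqrt (real n) else 0) \<in> colset n" unfolding colset_def by auto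
  then show ?thesis by blast
qed

lemma colset_fin: "finite (colset n)"
proof -
  have "colset n \<subseteq> (\<lambda>s i. if i < n then s i else 0) ` PiE {..<n} (\<lambda>_. {1 / sqrt (real n), - 1 / sqrt (real n)})"
  proof
    fix c assume c: "c \<in> colset n"
    have "c = (\<lambda>i. if i < n then restrict c {..<n} i else 0)" using c unfolding colset_def by auto
    moreover have "restrict c {..<n} \<in> PiE {..<n} (\<lambda>_. {1 / sqrt (real n), - 1 / sqrt (real n)})"
      using c unfolding colset_def by auto
    ultimately show "c \<in> (\<lambda>s i. if i < n then s i else 0) ` PiE {..<n} (\<lambda>_. {1 / sqrt (real n), - 1 / sqrt (real n)})"
      by blast
  qed
  then show ?thesis by (rule finite_subset) (intro finite_imageI finite_PiE; simp)
qed

lemma Mset_eq: "Mset n = mat n ` PiE {..<n} (\<lambda>_. colset n)"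
proof
  show "Mset n \<subseteq> mat n ` PiE {..<n} (\<lambda>_. colset n)"
  proof
    fix A assume A: "A \<in> Mset n"
    define g where "g = restrict (\<lambda>j i. A i j) {..<n}"
    have "mat n g = A"
      using A unfolding mat_def g_def Mset_def by (auto intro!: ext)
    moreover have "g \<in> PiE {..<n} (\<lambda>_. colset n)"
      using A unfolding g_def Mset_def colset_def by auto
    ultimately show "A \<in> mat n ` PiE {..<n} (\<lambda>_. colset n)" by blast
  qed
next
  show "mat n ` PiE {..<n} (\<lambda>_. colset n) \<subseteq> Mset n"
  proof (rule subsetI, elim imageE)
    fix A g assume A: "A = mat n g" and g: "g \<in> PiE {..<n} (\<lambda>_. colset n)"
    have col: "\<And>j. j < n \<Longrightarrow> g j \<in> colset n" using g by auto
    have "A i j = 1 / sqrt (real n) \<or> A i j = - 1 / sqrt (real n)" if "i < n" "j < n" for i j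
    proof -
      have "g j \<in> colset n" using col that(2) .
      then have "g j i = 1 / sqrt (real n) \<or> g j i = - 1 / sqrt (real n)" using that(1) unfolding colset_def by blast
      then show ?thesis using that(2) unfolding A mat_def by simp
    qed
    moreover have "A i j = 0" if "\<not> (i < n \<and> j < n)" for i j
    proof (cases "j < n")
      case True
      then have "g j \<in> colset n" using col by blast
      then show ?thesis using that True unfolding A mat_def colset_def by auto
    qed (simp add: A mat_def)
    ultimately show "A \<in> Mset n" unfolding Mset_def by blast
  qed
qed

lemma mat_inj: "inj_on (mat n) (PiE {..<n} (\<lambda>_. colset n))"
proof (rule inj_onI)
  fix g g' assume g: "g \<in> PiE {..<n} (\<lambda>_. colset n)" and g': "g' \<in> PiE {..<n} (\<lambda>_. colset n)"
    and e: "mat n g = mat n g'"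
  show "g = g'"
  proof
    fix j show "g j = g' j"
    proof (cases "j < n")
      case True
      show ?thesis
      proof
        fix i show "g j i = g' j i" using fun_cong[OF fun_cong[OF e, of i], of j] True by (simp add: mat_def)
      qed
    next
      case False then show ?thesis using g g' by (simp add: PiE_def extensional_def)
    qed
  qed
qed

lemma conc:
  fixes F :: "(nat \<Rightarrow> nat \<Rightarrow> real) \<Rightarrow> real" and \<eta> :: real
  assumes n: "n > 0" and eta: "\<eta> > 0"
    and bd: "\<And>H H' j. (\<And>x i. x \<noteq> j \<Longrightarrow> H i x = H' i x) \<Longrightarrow> \<bar>F H - F H'\<bar> \<le> 1 / real n"
  shows "measure_pmf.prob (pmf_of_set (Mset n))
            {H. \<bar>F H - measure_pmf.expectation (pmf_of_set (Mset n)) F\<bar> > \<eta>} \<le> 1 / (real n * \<eta>\<^sup>2)"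
proof -
  define Q where "Q = PiE {..<n} (\<lambda>_. colset n)"
  define X where "X = Mset n"
  have finQ: "finite Q" unfolding Q_def using colset_fin by (simp add: finite_PiE)
  have neQ: "Q \<noteq> {}" unfolding Q_def using colset_ne by (simp add: PiE_eq_empty_iff)
  have XQ: "X = mat n ` Q" unfolding X_def Q_def by (rule Mset_eq)
  have inj: "inj_on (mat n) Q" unfolding Q_def by (rule mat_inj)
  have finX: "finite X" using finQ XQ by simp
  have neX: "X \<noteq> {}" using neQ XQ by simp
  have cardX: "card X = card Q" using XQ inj by (simp add: card_image)
  have cpos: "real (card X) > 0" using finX neX by (simp add: card_gt_0_iff)
  have sumX: "(\<Sum>H\<in>X. G H) = (\<Sum>g\<in>Q. G (mat n g))" for G :: "_ \<Rightarrow> real"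
    unfolding XQ by (rule sum.reindex[OF inj, unfolded comp_def])
  define E where "E = (\<Sum>H\<in>X. F H) / card X"
  have EE: "measure_pmf.expectation (pmf_of_set X) F = E"
    unfolding E_def using finX neX by (simp add: integral_pmf_of_set)
  have var: "(\<Sum>H\<in>X. (F H - E)\<^sup>2) / card X \<le> 1 / real n"
  proof -
    have "(\<Sum>g\<in>Q. ((F \<circ> mat n) g - (\<Sum>g\<in>Q. (F \<circ> mat n) g) / card Q)\<^sup>2) / card Q \<le> card {..<n} * (1 / real n)\<^sup>2"
      unfolding Q_def
    proof (rule var_bound_sum[OF _ colset_fin colset_ne])
      fix j g y assume j: "j \<in> {..<n}" and g: "g \<in> PiE {..<n} (\<lambda>_. colset n)" and y: "y \<in> colset n"
      have "\<bar>F (mat n (g(j:=y))) - F (mat n g)\<bar> \<le> 1 / real n"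
        by (rule bd[of j]) (simp add: mat_def)
      then show "\<bar>(F \<circ> mat n) (g(j:=y)) - (F \<circ> mat n) g\<bar> \<le> 1 / real n" by simp
    qed auto
    moreover have "card {..<n} * (1 / real n)\<^sup>2 = 1 / real n" using n by (simp add: power2_eq_square)
    moreover have "(\<Sum>g\<in>Q. ((F \<circ> mat n) g - (\<Sum>g\<in>Q. (F \<circ> mat n) g) / card Q)\<^sup>2) / card Q = (\<Sum>H\<in>X. (F H - E)\<^sup>2) / card X"
      unfolding E_def sumX cardX by simp
    ultimately show ?thesis by simp
  qed
  define B where "B = {H. \<bar>F H - E\<bar> > \<eta>}"
  have "real (card (X \<inter> B)) * \<eta>\<^sup>2 = (\<Sum>H\<in>X \<inter> B. \<eta>\<^sup>2)" by simp
  also have "\<dots> \<le> (\<Sum>H\<in>X \<inter> B. (F H - E)\<^sup>2)"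
  proof (rule sum_mono)
    fix H assume "H \<in> X \<inter> B"
    then have "\<bar>\<eta>\<bar> \<le> \<bar>F H - E\<bar>" using eta unfolding B_def by simp
    then show "\<eta>\<^sup>2 \<le> (F H - E)\<^sup>2" by (simp only: abs_le_square_iff)
  qed
  also have "\<dots> \<le> (\<Sum>H\<in>X. (F H - E)\<^sup>2)" by (rule sum_mono2[OF finX]) auto
  finally have cb: "real (card (X \<inter> B)) * \<eta>\<^sup>2 \<le> (\<Sum>H\<in>X. (F H - E)\<^sup>2)" .
  have "measure_pmf.prob (pmf_of_set X) B = real (card (X \<inter> B)) / card X"
    using finX neX by (simp add: measure_pmf_of_set)
  also have "\<dots> \<le> ((\<Sum>H\<in>X. (F H - E)\<^sup>2) / \<eta>\<^sup>2) / card X"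
    using cb eta cpos by (intro divide_right_mono) (simp_all add: field_simps)
  also have "\<dots> = ((\<Sum>H\<in>X. (F H - E)\<^sup>2) / card X) / \<eta>\<^sup>2" by simp
  also have "\<dots> \<le> (1 / real n) / \<eta>\<^sup>2" using var eta by (intro divide_right_mono) simp_all
  also have "\<dots> = 1 / (real n * \<eta>\<^sup>2)" by simp
  finally show ?thesis unfolding B_def EE[symmetric] X_def .
qed

theorem lemma11p2:
  fixes M :: "nat \<Rightarrow> nat \<Rightarrow> nat \<Rightarrow> real" and \<eta> :: real
  assumes "\<And>n. M n \<in> Mset n"
    and "\<eta> > 0"
  shows "(\<lambda>n. measure_pmf.prob (pmf_of_set (Mset n))
            {H. \<bar>dM n (M n) H - measure_pmf.expectation (pmf_of_set (Mset n)) (\<lambda>H'. dM n (M n) H')\<bar> > \<eta>})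
         \<longlonglongrightarrow> 0"
proof (rule tendsto_sandwich[of "\<lambda>_. 0" _ _ "\<lambda>n. (1 / \<eta>\<^sup>2) / real n"])
  show "\<forall>\<^sub>F n in sequentially. 0 \<le> measure_pmf.prob (pmf_of_set (Mset n))
            {H. \<bar>dM n (M n) H - measure_pmf.expectation (pmf_of_set (Mset n)) (\<lambda>H'. dM n (M n) H')\<bar> > \<eta>}"
    by simp
  show "\<forall>\<^sub>F n in sequentially. measure_pmf.prob (pmf_of_set (Mset n))
            {H. \<bar>dM n (M n) H - measure_pmf.expectation (pmf_of_set (Mset n)) (\<lambda>H'. dM n (M n) H')\<bar> > \<eta>}
          \<le> (1 / \<eta>\<^sup>2) / real n"
  proof (rule eventually_sequentiallyI[of 1])
    fix n :: nat assume "1 \<le> n"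
    then have n: "n > 0" by simp
    have "measure_pmf.prob (pmf_of_set (Mset n))
            {H. \<bar>dM n (M n) H - measure_pmf.expectation (pmf_of_set (Mset n)) (\<lambda>H'. dM n (M n) H')\<bar> > \<eta>}
          \<le> 1 / (real n * \<eta>\<^sup>2)"
      by (rule conc[OF n assms(2)]) (rule dM_shift[OF n], blast)
    then show "measure_pmf.prob (pmf_of_set (Mset n))
            {H. \<bar>dM n (M n) H - measure_pmf.expectation (pmf_of_set (Mset n)) (\<lambda>H'. dM n (M n) H')\<bar> > \<eta>}
          \<le> (1 / \<eta>\<^sup>2) / real n" by (simp add: field_simps)
  qed
  show "(\<lambda>_. 0) \<longlonglongrightarrow> (0::real)" by simp
  show "(\<lambda>n. (1 / \<eta>\<^sup>2) / real n) \<longlonglongrightarrow> 0" by (rule lim_const_over_n)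
qed


end
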